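(* Let $X$ and $Y$ be completely regular Hausdorff spaces and let $c: X\times Y\to\mathbb{R}$ be a bounded function with property (H). Set $$A:=\{\phi^{c\bar c}+\inf_Y\phi^c:\ \phi\in C_b(X)\}\subseteq C_b(X),\qquad B:=\{\phi^{c}-\inf_Y\phi^c:\ \phi\in C_b(X)\}\subseteq C_b(Y).$$ Then the closures $\overline{A}^{\mathcal{T}_p}$ (in $(C_b(X),\mathcal{T}_p)$) and $\overline{B}^{\mathcal{T}_p}$ (in $(C_b(Y),\mathcal{T}_p)$) are uniformly bounded and equicontinuous, i.e. $\overline{A}^{\mathcal{T}_p}\in\mathcal{E}(X)$ and $\overline{B}^{\mathcal{T}_p}\in\mathcal{E}(Y)$. In particular they are compact in $(C_b(X),\mathcal{T}_p)$ and $(C_b(Y),\mathcal{T}_p)$ respectively, and $\overline{A}^{\mathcal{T}_p}\times\overline{B}^{\mathcal{T}_p}$ is compact in the product space $(C_b(X),\mathcal{T}_p)\times(C_b(Y),\mathcal{T}_p)$.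
   Context: $C_b(Z)$ denotes the space of real-valued bounded continuous functions on $Z$; $\mathcal{T}_p$ is the topology of pointwise convergence on $C_b(Z)$; $\mathcal{E}(Z)$ is the family of uniformly bounded equicontinuous subsets of $C_b(Z)$. For $\xi: X\to\mathbb{R}$, $\xi^c(y):=\inf_{x\in X}\{c(x,y)-\xi(x)\}$; for $\zeta:Y\to\mathbb{R}$, $\zeta^{\bar c}(x):=\inf_{y\in Y}\{c(x,y)-\zeta(y)\}$; $\phi^{c\bar c}:=(\phi^c)^{\bar c}$. Define $\overline{d}_c(x,x'):=\sup_{y\in Y}|c(x,y)-c(x',y)|$ and $\underline{d}_c(y,y'):=\sup_{x\in X}|c(x,y)-c(x,y')|$. The function $c$ has property (H) if for every $x_0\in X$, $\lim_{x\to x_0}\overline{d}_c(x,x_0)=0$, and for every $y_0\in Y$, $\lim_{y\to y_0}\underline{d}_c(y,y_0)=0$ (limits in the topologies of $X$ and $Y$). *)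

theory Defs
  imports "HOL-Analysis.Analysis"
begin

text \<open>C_b(Z): real-valued bounded continuous functions on the topological space Z,
  represented extensionally (value undefined outside topspace Z), so that they are
  points of the product space R^(topspace Z).\<close>
definition Cb :: "'a topology \<Rightarrow> ('a \<Rightarrow> real) set" where
  "Cb Z = {f. f \<in> extensional (topspace Z) \<and> continuous_map Z euclideanreal f
              \<and> (\<exists>M. \<forall>z\<in>topspace Z. \<bar>f z\<bar> \<le> M)}"

definition Tp :: "'a topology \<Rightarrow> ('a \<Rightarrow> real) topology" where
  "Tp Z = subtopology (product_topology (\<lambda>_. euclideanreal) (topspace Z)) (Cb Z)"

definition unif_bdd_equicont :: "'a topology \<Rightarrow> ('a \<Rightarrow> real) set \<Rightarrow> bool" where
  "unif_bdd_equicont Z F \<longleftrightarrow> F \<subseteq> Cb Z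
     \<and> (\<exists>M. \<forall>f\<in>F. \<forall>z\<in>topspace Z. \<bar>f z\<bar> \<le> M)
     \<and> (\<forall>z0\<in>topspace Z. \<forall>e>0. \<exists>U. openin Z U \<and> z0 \<in> U \<and>
            (\<forall>f\<in>F. \<forall>z\<in>U. \<bar>f z - f z0\<bar> < e))"

definition ctrans :: "'a topology \<Rightarrow> 'b topology \<Rightarrow> ('a \<Rightarrow> 'b \<Rightarrow> real) \<Rightarrow> ('a \<Rightarrow> real) \<Rightarrow> 'b \<Rightarrow> real" where
  "ctrans X Y c \<xi> = (\<lambda>y\<in>topspace Y. Inf {c x y - \<xi> x | x. x \<in> topspace X})"

definition cbtrans :: "'a topology \<Rightarrow> 'b topology \<Rightarrow> ('a \<Rightarrow> 'b \<Rightarrow> real) \<Rightarrow> ('b \<Rightarrow> real) \<Rightarrow> 'a \<Rightarrow> real" where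
  "cbtrans X Y c \<zeta> = (\<lambda>x\<in>topspace X. Inf {c x y - \<zeta> y | y. y \<in> topspace Y})"

definition dbar :: "'b topology \<Rightarrow> ('a \<Rightarrow> 'b \<Rightarrow> real) \<Rightarrow> 'a \<Rightarrow> 'a \<Rightarrow> real" where
  "dbar Y c x x' = Sup {\<bar>c x y - c x' y\<bar> | y. y \<in> topspace Y}"

definition dunder :: "'a topology \<Rightarrow> ('a \<Rightarrow> 'b \<Rightarrow> real) \<Rightarrow> 'b \<Rightarrow> 'b \<Rightarrow> real" where
  "dunder X c y y' = Sup {\<bar>c x y - c x y'\<bar> | x. x \<in> topspace X}"

definition propH :: "'a topology \<Rightarrow> 'b topology \<Rightarrow> ('a \<Rightarrow> 'b \<Rightarrow> real) \<Rightarrow> bool" where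
  "propH X Y c \<longleftrightarrow>
     (\<forall>x0\<in>topspace X. limitin euclideanreal (\<lambda>x. dbar Y c x x0) 0 (atin X x0)) \<and>
     (\<forall>y0\<in>topspace Y. limitin euclideanreal (\<lambda>y. dunder X c y y0) 0 (atin Y y0))"

end

theory Submission
  imports Defs
begin


lemma key:
  fixes Z :: "'a topology" and F :: "('a\<Rightarrow>real) set" and d :: "'a\<Rightarrow>'a\<Rightarrow>real"
  assumes ext: "F \<subseteq> extensional (topspace Z)"
    and bd: "\<forall>f\<in>F. \<forall>z\<in>topspace Z. \<bar>f z\<bar> \<le> R"
    and lip: "\<forall>f\<in>F. \<forall>z\<in>topspace Z. \<forall>z0\<in>topspace Z. \<bar>f z - f z0\<bar> \<le> d z z0"
    and lim: "\<forall>z0\<in>topspace Z. \<forall>e>0. \<exists>U. openin Z U \<and> z0 \<in> U \<and> (\<forall>z\<in>U-{z0}. d z z0 < e)"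
  shows "F \<subseteq> Cb Z \<and> unif_bdd_equicont Z (Tp Z closure_of F) \<and> compactin (Tp Z) (Tp Z closure_of F)"
proof -
  define P where "P = product_topology (\<lambda>_. euclideanreal) (topspace Z)"
  define K where "K = {f \<in> extensional (topspace Z). (\<forall>z\<in>topspace Z. \<bar>f z\<bar> \<le> R) \<and>
     (\<forall>z\<in>topspace Z. \<forall>z0\<in>topspace Z. \<bar>f z - f z0\<bar> \<le> d z z0)}"
  have FK: "F \<subseteq> K" using ext bd lip unfolding K_def by auto
  have eq: "\<exists>U. openin Z U \<and> z0 \<in> U \<and> (\<forall>z\<in>U. \<bar>f z - f z0\<bar> < e)"
    if hf: "f \<in> K" and hz: "z0 \<in> topspace Z" and he: "e > 0" for f z0 e
  proof -
    obtain U where U: "openin Z U" "z0 \<in> U" "\<forall>z\<in>U-{z0}. d z z0 < e"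
      using lim hz he by blast
    have "\<forall>z\<in>U. \<bar>f z - f z0\<bar> < e"
    proof
      fix z assume z: "z \<in> U"
      show "\<bar>f z - f z0\<bar> < e"
      proof (cases "z = z0")
        case True then show ?thesis using he by simp
      next
        case False
        have "z \<in> topspace Z" using U(1) z openin_subset by blast
        then have "\<bar>f z - f z0\<bar> \<le> d z z0" using hf hz unfolding K_def by blast
        then show ?thesis using U(3) z False by force
      qed
    qed
    then show ?thesis using U by blast
  qed
  have KC: "K \<subseteq> Cb Z"
  proof
    fix f assume f: "f \<in> K"
    have "continuous_map Z euclideanreal f"
      unfolding continuous_map_atin
    proof (intro ballI)
      fix z0 assume z0: "z0 \<in> topspace Z"
      show "limitin euclideanreal f (f z0) (atin Z z0)"
        unfolding limitin_def
      proof (intro conjI allI impI)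
        show "f z0 \<in> topspace euclideanreal" by simp
        fix V assume V: "openin euclideanreal V \<and> f z0 \<in> V"
        then obtain e where e: "e > 0" "ball (f z0) e \<subseteq> V"
          using open_contains_ball by (metis open_openin)
        obtain U where U: "openin Z U" "z0 \<in> U" "\<forall>z\<in>U. \<bar>f z - f z0\<bar> < e"
          using eq[OF f z0 e(1)] by blast
        have "\<forall>z\<in>U - {z0}. f z \<in> V"
        proof
          fix z assume "z \<in> U - {z0}"
          then have "\<bar>f z - f z0\<bar> < e" using U(3) by blast
          then have "f z \<in> ball (f z0) e" by (simp add: dist_real_def abs_minus_commute)
          then show "f z \<in> V" using e(2) by blast
        qed
        then show "\<forall>\<^sub>F x in atin Z z0. f x \<in> V"
          unfolding eventually_atin using U by blast
      qed
    qed
    then show "f \<in> Cb Z" using f unfolding K_def Cb_def by blast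
  qed
  have Kclosed: "closedin P K"
  proof -
    have proj: "continuous_map P euclideanreal (\<lambda>f. f z)" if "z \<in> topspace Z" for z
      unfolding P_def by (rule continuous_map_product_projection[OF that])
    have c1: "closedin P {f \<in> topspace P. \<bar>f z\<bar> \<le> R}" if "z \<in> topspace Z" for z
    proof -
      have "continuous_map P euclideanreal (\<lambda>f. \<bar>f z\<bar>)"
        using proj[OF that] by (simp add: continuous_map_real_abs)
      then have "closedin P {f \<in> topspace P. \<bar>f z\<bar> \<in> {..R}}"
        by (rule closedin_continuous_map_preimage) (simp add: closed_closedin[symmetric])
      then show ?thesis by simp
    qed
    have c2: "closedin P {f \<in> topspace P. \<bar>f z - f z0\<bar> \<le> d z z0}"
      if "z \<in> topspace Z" "z0 \<in> topspace Z" for z z0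
    proof -
      have "continuous_map P euclideanreal (\<lambda>f. \<bar>f z - f z0\<bar>)"
        using proj[OF that(1)] proj[OF that(2)]
        by (intro continuous_map_real_abs continuous_map_diff)
      then have "closedin P {f \<in> topspace P. \<bar>f z - f z0\<bar> \<in> {..d z z0}}"
        by (rule closedin_continuous_map_preimage) (simp add: closed_closedin[symmetric])
      then show ?thesis by simp
    qed
    define C1 where "C1 = (\<lambda>z. {f \<in> topspace P. \<bar>f z\<bar> \<le> R}) ` topspace Z"
    define C2 where "C2 = (\<lambda>(z,z0). {f \<in> topspace P. \<bar>f z - f z0\<bar> \<le> d z z0}) ` (topspace Z \<times> topspace Z)"
    have tP: "topspace P = extensional (topspace Z)"
      unfolding P_def topspace_product_topology_alt by simp
    have "K = \<Inter> (insert (topspace P) (C1 \<union> C2))"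
    proof (rule equalityI)
      show "K \<subseteq> \<Inter> (insert (topspace P) (C1 \<union> C2))"
        unfolding K_def C1_def C2_def tP by blast
      show "\<Inter> (insert (topspace P) (C1 \<union> C2)) \<subseteq> K"
      proof
        fix f assume f: "f \<in> \<Inter> (insert (topspace P) (C1 \<union> C2))"
        have 1: "f \<in> extensional (topspace Z)" using f tP by blast
        have 2: "\<forall>z\<in>topspace Z. \<bar>f z\<bar> \<le> R"
        proof
          fix z assume "z \<in> topspace Z"
          then have "{f \<in> topspace P. \<bar>f z\<bar> \<le> R} \<in> C1" unfolding C1_def by blast
          then show "\<bar>f z\<bar> \<le> R" using f by blast
        qed
        have 3: "\<forall>z\<in>topspace Z. \<forall>z0\<in>topspace Z. \<bar>f z - f z0\<bar> \<le> d z z0"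
        proof (intro ballI)
          fix z z0 assume "z \<in> topspace Z" "z0 \<in> topspace Z"
          then have "{f \<in> topspace P. \<bar>f z - f z0\<bar> \<le> d z z0} \<in> C2" unfolding C2_def
            by (intro image_eqI[where x="(z,z0)"]) auto
          then show "\<bar>f z - f z0\<bar> \<le> d z z0" using f by blast
        qed
        show "f \<in> K" unfolding K_def using 1 2 3 by blast
      qed
    qed
    also have "closedin P \<dots>"
    proof (rule closedin_Inter)
      show "insert (topspace P) (C1 \<union> C2) \<noteq> {}" by simp
      fix S assume "S \<in> insert (topspace P) (C1 \<union> C2)"
      then show "closedin P S" unfolding C1_def C2_def using c1 c2 by auto
    qed
    finally show ?thesis .
  qed
  have Kcomp: "compactin P K"
  proof -
    have "compactin P (PiE (topspace Z) (\<lambda>_. {-R..R}))"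
      unfolding P_def compactin_PiE by (simp add: compactin_euclidean_iff)
    moreover have "K \<subseteq> PiE (topspace Z) (\<lambda>_. {-R..R})"
      unfolding K_def PiE_def by (auto simp: abs_le_iff)
    ultimately show ?thesis using closed_compactin Kclosed by blast
  qed
  have FC: "F \<subseteq> Cb Z" using FK KC by blast
  define T where "T = Tp Z closure_of F"
  have clP: "P closure_of F \<subseteq> K" using closure_of_minimal[OF FK Kclosed] .
  have T: "T = P closure_of F"
    unfolding T_def Tp_def P_def[symmetric] closure_of_subtopology
    using FC clP KC by (metis Int_absorb1 Int_absorb2 order_trans)
  have TK: "T \<subseteq> K" using T clP by simp
  have "compactin P T" using T closed_compactin[OF Kcomp clP] by simp
  then have cT: "compactin (Tp Z) T" unfolding Tp_def P_def[symmetric] compactin_subtopology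
    using TK KC by blast
  have ue: "unif_bdd_equicont Z T"
    unfolding unif_bdd_equicont_def
  proof (intro conjI)
    show "T \<subseteq> Cb Z" using TK KC by blast
    show "\<exists>M. \<forall>f\<in>T. \<forall>z\<in>topspace Z. \<bar>f z\<bar> \<le> M" using TK unfolding K_def by blast
    show "\<forall>z0\<in>topspace Z. \<forall>e>0. \<exists>U. openin Z U \<and> z0 \<in> U \<and> (\<forall>f\<in>T. \<forall>z\<in>U. \<bar>f z - f z0\<bar> < e)"
    proof (intro ballI allI impI)
      fix z0 e assume z0: "z0 \<in> topspace Z" and e: "(e::real) > 0"
      obtain U where U: "openin Z U" "z0 \<in> U" "\<forall>z\<in>U-{z0}. d z z0 < e"
        using lim z0 e by blast
      have "\<forall>f\<in>T. \<forall>z\<in>U. \<bar>f z - f z0\<bar> < e"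
      proof (intro ballI)
        fix f z assume f: "f \<in> T" and z: "z \<in> U"
        show "\<bar>f z - f z0\<bar> < e"
        proof (cases "z = z0")
          case True then show ?thesis using e by simp
        next
          case False
          have "z \<in> topspace Z" using U(1) z openin_subset by blast
          then have "\<bar>f z - f z0\<bar> \<le> d z z0" using f TK z0 unfolding K_def by blast
          then show ?thesis using U(3) z False by force
        qed
      qed
      then show "\<exists>U. openin Z U \<and> z0 \<in> U \<and> (\<forall>f\<in>T. \<forall>z\<in>U. \<bar>f z - f z0\<bar> < e)"
        using U by blast
    qed
  qed
  show ?thesis using FC ue cT unfolding T_def by blast
qed


lemma inf_lip:
  fixes g h :: "'x \<Rightarrow> real"
  assumes "S \<noteq> {}" "\<forall>x\<in>S. g x \<le> h x + D" "bdd_below (g ` S)"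
  shows "Inf (g ` S) \<le> Inf (h ` S) + D"
proof -
  have "Inf (g ` S) - D \<le> Inf (h ` S)"
  proof (rule cInf_greatest)
    show "h ` S \<noteq> {}" using assms(1) by simp
    fix v assume "v \<in> h ` S"
    then obtain x where x: "x \<in> S" "v = h x" by blast
    have "Inf (g ` S) \<le> g x" using cInf_lower[OF _ assms(3)] x(1) by simp
    then show "Inf (g ` S) - D \<le> v" using assms(2) x by force
  qed
  then show ?thesis by simp
qed

lemma ctrans_eq: "y \<in> topspace Y \<Longrightarrow> ctrans X Y c \<phi> y = Inf ((\<lambda>x. c x y - \<phi> x) ` topspace X)"
  unfolding ctrans_def by (simp add: Setcompr_eq_image)

lemma cbtrans_eq: "x \<in> topspace X \<Longrightarrow> cbtrans X Y c \<psi> x = Inf ((\<lambda>y. c x y - \<psi> y) ` topspace Y)"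
  unfolding cbtrans_def by (simp add: Setcompr_eq_image)

lemma dunder_ge:
  assumes "\<forall>x\<in>topspace X. \<forall>y\<in>topspace Y. \<bar>c x y\<bar> \<le> M" "x \<in> topspace X" "y \<in> topspace Y" "y' \<in> topspace Y"
  shows "\<bar>c x y - c x y'\<bar> \<le> dunder X c y y'"
  unfolding dunder_def
proof (rule cSup_upper)
  show "\<bar>c x y - c x y'\<bar> \<in> {\<bar>c x y - c x y'\<bar> |x. x \<in> topspace X}" using assms by blast
  show "bdd_above {\<bar>c x y - c x y'\<bar> |x. x \<in> topspace X}"
    unfolding bdd_above_def
  proof (intro exI[of _ "2*M"] ballI)
    fix v assume "v \<in> {\<bar>c x y - c x y'\<bar> |x. x \<in> topspace X}"
    then obtain x where "x \<in> topspace X" "v = \<bar>c x y - c x y'\<bar>" by blast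
    then show "v \<le> 2*M" using assms(1,3,4) by (smt (verit))
  qed
qed

lemma dbar_ge:
  assumes "\<forall>x\<in>topspace X. \<forall>y\<in>topspace Y. \<bar>c x y\<bar> \<le> M" "x \<in> topspace X" "x' \<in> topspace X" "y \<in> topspace Y"
  shows "\<bar>c x y - c x' y\<bar> \<le> dbar Y c x x'"
  unfolding dbar_def
proof (rule cSup_upper)
  show "\<bar>c x y - c x' y\<bar> \<in> {\<bar>c x y - c x' y\<bar> |y. y \<in> topspace Y}" using assms by blast
  show "bdd_above {\<bar>c x y - c x' y\<bar> |y. y \<in> topspace Y}"
    unfolding bdd_above_def
  proof (intro exI[of _ "2*M"] ballI)
    fix v assume "v \<in> {\<bar>c x y - c x' y\<bar> |y. y \<in> topspace Y}"
    then obtain y where "y \<in> topspace Y" "v = \<bar>c x y - c x' y\<bar>" by blast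
    then show "v \<le> 2*M" using assms(1,2,3) by (smt (verit))
  qed
qed

lemma lim_nbhd:
  assumes "limitin euclideanreal d 0 (atin Z z0)" "z0 \<in> topspace Z" "e > 0"
  shows "\<exists>U. openin Z U \<and> z0 \<in> U \<and> (\<forall>z\<in>U-{z0}. d z < e)"
proof -
  have "openin euclideanreal (ball 0 e) \<and> (0::real) \<in> ball 0 e" using assms(3) by simp
  then have "\<forall>\<^sub>F z in atin Z z0. d z \<in> ball 0 e" using assms(1) unfolding limitin_def by blast
  then obtain U where U: "openin Z U" "z0 \<in> U" "\<forall>z\<in>U-{z0}. d z \<in> ball 0 e"
    unfolding eventually_atin using assms(2) by blast
  have "\<forall>z\<in>U-{z0}. d z < e"
  proof
    fix z assume "z \<in> U-{z0}"
    then have "\<bar>d z\<bar> < e" using U(3) by (simp add: dist_real_def)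
    then show "d z < e" by simp
  qed
  then show ?thesis using U by blast
qed

lemma psi_props:
  assumes cb: "\<forall>x\<in>topspace X. \<forall>y\<in>topspace Y. \<bar>c x y\<bar> \<le> M"
    and pb: "\<forall>x\<in>topspace X. \<bar>\<phi> x\<bar> \<le> P"
    and ne: "topspace X \<noteq> {}"
    and y: "y \<in> topspace Y"
  shows "-M - P \<le> ctrans X Y c \<phi> y"
    and "\<And>x. x \<in> topspace X \<Longrightarrow> ctrans X Y c \<phi> y \<le> c x y - \<phi> x"
    and "\<And>y' D. y' \<in> topspace Y \<Longrightarrow> \<forall>x\<in>topspace X. \<bar>c x y - c x y'\<bar> \<le> D \<Longrightarrow>
           ctrans X Y c \<phi> y \<le> ctrans X Y c \<phi> y' + D"
proof -
  have bb: "bdd_below ((\<lambda>x. c x y - \<phi> x) ` topspace X)"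
    unfolding bdd_below_def
  proof (intro exI[of _ "-M-P"] ballI)
    fix v assume "v \<in> (\<lambda>x. c x y - \<phi> x) ` topspace X"
    then obtain x where "x \<in> topspace X" "v = c x y - \<phi> x" by blast
    then show "-M-P \<le> v" using cb pb y by (smt (verit))
  qed
  show "-M - P \<le> ctrans X Y c \<phi> y"
    unfolding ctrans_eq[OF y]
  proof (rule cInf_greatest)
    show "(\<lambda>x. c x y - \<phi> x) ` topspace X \<noteq> {}" using ne by simp
    fix v assume "v \<in> (\<lambda>x. c x y - \<phi> x) ` topspace X"
    then obtain x where "x \<in> topspace X" "v = c x y - \<phi> x" by blast
    then show "-M-P \<le> v" using cb pb y by (smt (verit))
  qed
  show "\<And>x. x \<in> topspace X \<Longrightarrow> ctrans X Y c \<phi> y \<le> c x y - \<phi> x"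
    unfolding ctrans_eq[OF y] using cInf_lower[OF _ bb] by simp
  fix y' D assume y': "y' \<in> topspace Y" and D: "\<forall>x\<in>topspace X. \<bar>c x y - c x y'\<bar> \<le> D"
  show "ctrans X Y c \<phi> y \<le> ctrans X Y c \<phi> y' + D"
    unfolding ctrans_eq[OF y] ctrans_eq[OF y']
    by (rule inf_lip[OF ne _ bb]) (use D in force)
qed




lemma B_elem:
  assumes cb: "\<forall>x\<in>topspace X. \<forall>y\<in>topspace Y. \<bar>c x y\<bar> \<le> M"
    and ne: "topspace X \<noteq> {}"
    and phi: "\<phi> \<in> Cb X"
    and y: "y \<in> topspace Y" and y0: "y0 \<in> topspace Y"
  defines "\<psi> \<equiv> ctrans X Y c \<phi>"
  defines "m \<equiv> Inf (\<psi> ` topspace Y)"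
  shows "\<bar>\<psi> y - m\<bar> \<le> 2*M" and "\<bar>\<psi> y - \<psi> y0\<bar> \<le> dunder X c y y0"
    and "m \<le> \<psi> y" and "\<psi> y \<le> m + 2*M"
proof -
  obtain P where P: "\<forall>x\<in>topspace X. \<bar>\<phi> x\<bar> \<le> P" using phi unfolding Cb_def by blast
  note pp = psi_props[OF cb P ne]
  have lip2: "\<psi> a \<le> \<psi> b + 2*M" if "a \<in> topspace Y" "b \<in> topspace Y" for a b
    unfolding \<psi>_def
  proof (rule pp(3)[OF that(1) that(2)])
    show "\<forall>x\<in>topspace X. \<bar>c x a - c x b\<bar> \<le> 2 * M" using cb that by (smt (verit))
  qed
  have bb: "bdd_below (\<psi> ` topspace Y)"
    unfolding bdd_below_def using pp(1) unfolding \<psi>_def by blast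
  show m1: "m \<le> \<psi> y" unfolding m_def using cInf_lower[OF _ bb] y by simp
  have m2: "\<psi> y - 2*M \<le> m" unfolding m_def
  proof (rule cInf_greatest)
    show "\<psi> ` topspace Y \<noteq> {}" using y by blast
    fix v assume "v \<in> \<psi> ` topspace Y"
    then obtain b where "b \<in> topspace Y" "v = \<psi> b" by blast
    then show "\<psi> y - 2 * M \<le> v" using lip2[OF y] by force
  qed
  then show "\<psi> y \<le> m + 2*M" by simp
  show "\<bar>\<psi> y - m\<bar> \<le> 2*M" using m1 m2 by simp
  have d1: "\<psi> y \<le> \<psi> y0 + dunder X c y y0"
    unfolding \<psi>_def using pp(3)[OF y y0] dunder_ge[OF cb _ y y0] by blast
  have d2: "\<psi> y0 \<le> \<psi> y + dunder X c y y0"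
    unfolding \<psi>_def
  proof (rule pp(3)[OF y0 y])
    show "\<forall>x\<in>topspace X. \<bar>c x y0 - c x y\<bar> \<le> dunder X c y y0"
      using dunder_ge[OF cb _ y y0] by (simp add: abs_minus_commute)
  qed
  show "\<bar>\<psi> y - \<psi> y0\<bar> \<le> dunder X c y y0" using d1 d2 by simp
qed


lemma A_elem:
  assumes cb: "\<forall>x\<in>topspace X. \<forall>y\<in>topspace Y. \<bar>c x y\<bar> \<le> M"
    and ne: "topspace X \<noteq> {}" and neY: "topspace Y \<noteq> {}"
    and phi: "\<phi> \<in> Cb X"
    and x: "x \<in> topspace X" and x0: "x0 \<in> topspace X"
  defines "\<psi> \<equiv> ctrans X Y c \<phi>"
  defines "m \<equiv> Inf (\<psi> ` topspace Y)"
  shows "\<bar>cbtrans X Y c \<psi> x + m\<bar> \<le> 3*M"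
    and "\<bar>cbtrans X Y c \<psi> x - cbtrans X Y c \<psi> x0\<bar> \<le> dbar Y c x x0"
proof -
  note be = B_elem[OF cb ne phi, folded \<psi>_def, folded m_def]
  have bb: "bdd_below ((\<lambda>y. c a y - \<psi> y) ` topspace Y)" if a: "a \<in> topspace X" for a
    unfolding bdd_below_def
  proof (intro exI[of _ "-M - (m + 2*M)"] ballI)
    fix v assume "v \<in> (\<lambda>y. c a y - \<psi> y) ` topspace Y"
    then obtain y where y: "y \<in> topspace Y" "v = c a y - \<psi> y" by blast
    have "\<psi> y \<le> m + 2*M" using be(4)[OF y(1) y(1)] .
    then show "-M - (m + 2*M) \<le> v" using cb a y by (smt (verit))
  qed
  have lo: "-M - (m + 2*M) \<le> cbtrans X Y c \<psi> x"
    unfolding cbtrans_eq[OF x]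
  proof (rule cInf_greatest)
    show "(\<lambda>y. c x y - \<psi> y) ` topspace Y \<noteq> {}" using neY by simp
    fix v assume "v \<in> (\<lambda>y. c x y - \<psi> y) ` topspace Y"
    then obtain y where y: "y \<in> topspace Y" "v = c x y - \<psi> y" by blast
    have "\<psi> y \<le> m + 2*M" using be(4)[OF y(1) y(1)] .
    then show "-M - (m + 2*M) \<le> v" using cb x y by (smt (verit))
  qed
  obtain y1 where y1: "y1 \<in> topspace Y" using neY by blast
  have "cbtrans X Y c \<psi> x \<le> c x y1 - \<psi> y1"
    unfolding cbtrans_eq[OF x] using cInf_lower[OF _ bb[OF x]] y1 by simp
  moreover have "m \<le> \<psi> y1" using be(3)[OF y1 y1] .
  moreover have "c x y1 \<le> M" using cb x y1 by (smt (verit))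
  ultimately have up: "cbtrans X Y c \<psi> x + m \<le> M" by simp
  show "\<bar>cbtrans X Y c \<psi> x + m\<bar> \<le> 3*M" using lo up by simp
  have d1: "cbtrans X Y c \<psi> x \<le> cbtrans X Y c \<psi> x0 + dbar Y c x x0"
    unfolding cbtrans_eq[OF x] cbtrans_eq[OF x0]
  proof (rule inf_lip[OF neY _ bb[OF x]])
    show "\<forall>y\<in>topspace Y. c x y - \<psi> y \<le> c x0 y - \<psi> y + dbar Y c x x0"
      using dbar_ge[OF cb x x0] by (smt (verit))
  qed
  have d2: "cbtrans X Y c \<psi> x0 \<le> cbtrans X Y c \<psi> x + dbar Y c x x0"
    unfolding cbtrans_eq[OF x] cbtrans_eq[OF x0]
  proof (rule inf_lip[OF neY _ bb[OF x0]])
    show "\<forall>y\<in>topspace Y. c x0 y - \<psi> y \<le> c x y - \<psi> y + dbar Y c x x0"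
      using dbar_ge[OF cb x x0] by (smt (verit))
  qed
  show "\<bar>cbtrans X Y c \<psi> x - cbtrans X Y c \<psi> x0\<bar> \<le> dbar Y c x x0" using d1 d2 by simp
qed



theorem mainTheorem2:
  fixes X :: "'a topology" and Y :: "'b topology" and c :: "'a \<Rightarrow> 'b \<Rightarrow> real"
  assumes "completely_regular_space X" and "Hausdorff_space X"
    and "completely_regular_space Y" and "Hausdorff_space Y"
    and "\<exists>M. \<forall>x\<in>topspace X. \<forall>y\<in>topspace Y. \<bar>c x y\<bar> \<le> M"
    and "propH X Y c"
  defines "A \<equiv> {(\<lambda>x\<in>topspace X. cbtrans X Y c (ctrans X Y c \<phi>) x
                     + Inf (ctrans X Y c \<phi> ` topspace Y)) | \<phi>. \<phi> \<in> Cb X}"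
    and "B \<equiv> {(\<lambda>y\<in>topspace Y. ctrans X Y c \<phi> y
                     - Inf (ctrans X Y c \<phi> ` topspace Y)) | \<phi>. \<phi> \<in> Cb X}"
  shows "A \<subseteq> Cb X \<and> B \<subseteq> Cb Y
    \<and> unif_bdd_equicont X (Tp X closure_of A)
    \<and> unif_bdd_equicont Y (Tp Y closure_of B)
    \<and> compactin (Tp X) (Tp X closure_of A)
    \<and> compactin (Tp Y) (Tp Y closure_of B)
    \<and> compactin (prod_topology (Tp X) (Tp Y)) ((Tp X closure_of A) \<times> (Tp Y closure_of B))"
proof -
  obtain M0 where cb0: "\<forall>x\<in>topspace X. \<forall>y\<in>topspace Y. \<bar>c x y\<bar> \<le> M0" using assms(5) by blast
  define M where "M = max M0 0"
  have cb: "\<forall>x\<in>topspace X. \<forall>y\<in>topspace Y. \<bar>c x y\<bar> \<le> M" using cb0 unfolding M_def by force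
  have pX: "\<forall>x0\<in>topspace X. limitin euclideanreal (\<lambda>x. dbar Y c x x0) 0 (atin X x0)"
    and pY: "\<forall>y0\<in>topspace Y. limitin euclideanreal (\<lambda>y. dunder X c y y0) 0 (atin Y y0)"
    using assms(6) unfolding propH_def by blast+
  have trivlim: "\<forall>z0\<in>topspace Z. \<forall>e>0. \<exists>U. openin Z U \<and> z0 \<in> U \<and> (\<forall>z\<in>U-{z0}. (\<lambda>_ _. 0::real) z z0 < e)"
    for Z :: "'z topology"
    by (metis openin_topspace)
  have extA: "A \<subseteq> extensional (topspace X)" unfolding A_def by (auto intro!: restrict_extensional)
  have extB: "B \<subseteq> extensional (topspace Y)" unfolding B_def by (auto intro!: restrict_extensional)
  have Apart: "A \<subseteq> Cb X \<and> unif_bdd_equicont X (Tp X closure_of A) \<and> compactin (Tp X) (Tp X closure_of A)"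
  proof (cases "topspace X = {}")
    case True
    show ?thesis by (rule key[OF extA _ _ trivlim, where R=0]) (simp_all add: True)
  next
    case neX: False
    show ?thesis
    proof (cases "topspace Y = {}")
      case True
      define k :: real where "k = Inf {} + Inf {}"
      have val: "\<forall>f\<in>A. \<forall>x\<in>topspace X. f x = k"
        unfolding A_def k_def using True by (auto simp: cbtrans_eq)
      show ?thesis
      proof (rule key[OF extA _ _ trivlim, where R="\<bar>k\<bar>"])
        show "\<forall>f\<in>A. \<forall>z\<in>topspace X. \<bar>f z\<bar> \<le> \<bar>k\<bar>" using val by simp
        show "\<forall>f\<in>A. \<forall>z\<in>topspace X. \<forall>z0\<in>topspace X. \<bar>f z - f z0\<bar> \<le> 0"
      proof (intro ballI)
        fix f z z0 assume "f \<in> A" "z \<in> topspace X" "z0 \<in> topspace X"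
        then have "f z = k" "f z0 = k" using val by blast+
        then show "\<bar>f z - f z0\<bar> \<le> 0" by simp
      qed
      qed
    next
      case neY: False
      show ?thesis
      proof (rule key[OF extA, where R="3*M" and d="dbar Y c"])
        show "\<forall>f\<in>A. \<forall>z\<in>topspace X. \<bar>f z\<bar> \<le> 3*M"
        proof (intro ballI)
          fix f z assume f: "f \<in> A" and z: "z \<in> topspace X"
          from f obtain \<phi> where \<phi>: "\<phi> \<in> Cb X" "f = (\<lambda>x\<in>topspace X. cbtrans X Y c (ctrans X Y c \<phi>) x + Inf (ctrans X Y c \<phi> ` topspace Y))"
            unfolding A_def by blast
          show "\<bar>f z\<bar> \<le> 3*M" using A_elem(1)[OF cb neX neY \<phi>(1) z z] z \<phi>(2) by simp
        qed
        show "\<forall>f\<in>A. \<forall>z\<in>topspace X. \<forall>z0\<in>topspace X. \<bar>f z - f z0\<bar> \<le> dbar Y c z z0"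
        proof (intro ballI)
          fix f z z0 assume f: "f \<in> A" and z: "z \<in> topspace X" and z0: "z0 \<in> topspace X"
          from f obtain \<phi> where \<phi>: "\<phi> \<in> Cb X" "f = (\<lambda>x\<in>topspace X. cbtrans X Y c (ctrans X Y c \<phi>) x + Inf (ctrans X Y c \<phi> ` topspace Y))"
            unfolding A_def by blast
          show "\<bar>f z - f z0\<bar> \<le> dbar Y c z z0" using A_elem(2)[OF cb neX neY \<phi>(1) z z0] z z0 \<phi>(2) by simp
        qed
        show "\<forall>z0\<in>topspace X. \<forall>e>0. \<exists>U. openin X U \<and> z0 \<in> U \<and> (\<forall>z\<in>U - {z0}. dbar Y c z z0 < e)"
        proof (intro ballI allI impI)
          fix z0 and e :: real assume "z0 \<in> topspace X" "e > 0"
          then show "\<exists>U. openin X U \<and> z0 \<in> U \<and> (\<forall>z\<in>U - {z0}. dbar Y c z z0 < e)"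
            using lim_nbhd[of "\<lambda>x. dbar Y c x z0" X z0 e] pX by blast
        qed
      qed
    qed
  qed
  have Bpart: "B \<subseteq> Cb Y \<and> unif_bdd_equicont Y (Tp Y closure_of B) \<and> compactin (Tp Y) (Tp Y closure_of B)"
  proof (cases "topspace X = {}")
    case True
    define k :: real where "k = Inf {} - Inf ((\<lambda>_. Inf {}) ` topspace Y)"
    have img: "ctrans X Y c \<phi> ` topspace Y = (\<lambda>_. Inf {}) ` topspace Y" for \<phi>
      using True by (auto simp: ctrans_eq)
    have val: "\<forall>f\<in>B. \<forall>y\<in>topspace Y. f y = k"
      unfolding B_def k_def img using True by (auto simp: ctrans_eq)
    show ?thesis
    proof (rule key[OF extB _ _ trivlim, where R="\<bar>k\<bar>"])
      show "\<forall>f\<in>B. \<forall>z\<in>topspace Y. \<bar>f z\<bar> \<le> \<bar>k\<bar>" using val by simp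
      show "\<forall>f\<in>B. \<forall>z\<in>topspace Y. \<forall>z0\<in>topspace Y. \<bar>f z - f z0\<bar> \<le> 0"
      proof (intro ballI)
        fix f z z0 assume "f \<in> B" "z \<in> topspace Y" "z0 \<in> topspace Y"
        then have "f z = k" "f z0 = k" using val by blast+
        then show "\<bar>f z - f z0\<bar> \<le> 0" by simp
      qed
    qed
  next
    case neX: False
    show ?thesis
    proof (rule key[OF extB, where R="2*M" and d="dunder X c"])
      show "\<forall>f\<in>B. \<forall>z\<in>topspace Y. \<bar>f z\<bar> \<le> 2*M"
      proof (intro ballI)
        fix f z assume f: "f \<in> B" and z: "z \<in> topspace Y"
        from f obtain \<phi> where \<phi>: "\<phi> \<in> Cb X" "f = (\<lambda>y\<in>topspace Y. ctrans X Y c \<phi> y - Inf (ctrans X Y c \<phi> ` topspace Y))"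
          unfolding B_def by blast
        show "\<bar>f z\<bar> \<le> 2*M" using B_elem(1)[OF cb neX \<phi>(1) z z] z \<phi>(2) by simp
      qed
      show "\<forall>f\<in>B. \<forall>z\<in>topspace Y. \<forall>z0\<in>topspace Y. \<bar>f z - f z0\<bar> \<le> dunder X c z z0"
      proof (intro ballI)
        fix f z z0 assume f: "f \<in> B" and z: "z \<in> topspace Y" and z0: "z0 \<in> topspace Y"
        from f obtain \<phi> where \<phi>: "\<phi> \<in> Cb X" "f = (\<lambda>y\<in>topspace Y. ctrans X Y c \<phi> y - Inf (ctrans X Y c \<phi> ` topspace Y))"
          unfolding B_def by blast
        show "\<bar>f z - f z0\<bar> \<le> dunder X c z z0" using B_elem(2)[OF cb neX \<phi>(1) z z0] z z0 \<phi>(2) by simp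
      qed
      show "\<forall>z0\<in>topspace Y. \<forall>e>0. \<exists>U. openin Y U \<and> z0 \<in> U \<and> (\<forall>z\<in>U - {z0}. dunder X c z z0 < e)"
      proof (intro ballI allI impI)
        fix z0 and e :: real assume "z0 \<in> topspace Y" "e > 0"
        then show "\<exists>U. openin Y U \<and> z0 \<in> U \<and> (\<forall>z\<in>U - {z0}. dunder X c z z0 < e)"
          using lim_nbhd[of "\<lambda>y. dunder X c y z0" Y z0 e] pY by blast
      qed
    qed
  qed
  have "compactin (prod_topology (Tp X) (Tp Y)) ((Tp X closure_of A) \<times> (Tp Y closure_of B))"
    using Apart Bpart by (simp add: compactin_Times)
  then show ?thesis using Apart Bpart by blast
qed

end
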